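(* Let $p$ be a prime and $B\subset\mathrm{GL}_2(\mathbb{F}_p)$ the subgroup of upper triangular matrices. Let $H\subset B$ be a subgroup of order divisible by $p$ of the form $H=D\cdot U$, where $D\subset B$ is a subgroup of diagonal matrices and $U$ is the cyclic group generated by $\begin{pmatrix}1&1\\0&1\end{pmatrix}$ (which is normal in $H$). Let $\pi:H\to H/U\simeq D$ be the quotient map. Let $\phi$ be an automorphism of $H$ such that $\pi(x)=\pi(\phi(x))$ for all $x\in H$. Then $\phi$ is given by conjugation in $B$: there is $A\in B$ such that $\phi(x)=AxA^{-1}$ for all $x\in H$. *)

theory Defs
  imports "HOL-Analysis.Analysis" "HOL-Algebra.Algebra"
begin

text \<open>GL_2 over a field k, as a HOL-Algebra monoid (it is a group).
  Matrices are 'k^2^2; entry (i,j) is A$i$j, indices 1 and 2.\<close>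
definition GL2 :: "('k::field^2^2) monoid" where
  "GL2 = \<lparr>carrier = {A. invertible A}, mult = (\<lambda>A B. A ** B), one = mat 1\<rparr>"

definition Borel :: "('k::field^2^2) set" where
  "Borel = {A. A$2$1 = 0 \<and> A$1$1 \<noteq> 0 \<and> A$2$2 \<noteq> 0}"

definition Diag :: "('k::field^2^2) set" where
  "Diag = {A. A$2$1 = 0 \<and> A$1$2 = 0 \<and> A$1$1 \<noteq> 0 \<and> A$2$2 \<noteq> 0}"

definition unip :: "'k::field^2^2" where
  "unip = (\<chi> i j. if i = 1 \<and> j = 2 then 1 else if i = j then 1 else 0)"

definition Ugrp :: "('k::field^2^2) set" where
  "Ugrp = generate GL2 {unip}"

definition DU :: "('k::field^2^2) set \<Rightarrow> ('k^2^2) set" where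
  "DU D = {d ** u | d u. d \<in> D \<and> u \<in> Ugrp}"

end

theory Submission
  imports Defs
begin

definition mk :: "'k::field \<Rightarrow> 'k \<Rightarrow> 'k \<Rightarrow> 'k \<Rightarrow> 'k^2^2" where
  "mk a b c d = (\<chi> i j. if i = 1 then (if j = 1 then a else b) else (if j = 1 then c else d))"

lemma mk_nth[simp]: "mk a b c d $ 1 $ 1 = a" "mk a b c d $ 1 $ 2 = b"
  "mk a b c d $ 2 $ 1 = c" "mk a b c d $ 2 $ 2 = d"
  by (simp_all add: mk_def)

lemma mm2[simp]: "((A::'k::field^2^2) ** B) $ i $ j = A$i$1*B$1$j + A$i$2*B$2$j"
  by (simp add: matrix_matrix_mult_def sum_2)

lemma mat_eq2: "(A::'k::field^2^2) = B \<longleftrightarrow> A$1$1 = B$1$1 \<and> A$1$2 = B$1$2 \<and> A$2$1 = B$2$1 \<and> A$2$2 = B$2$2"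
  by (auto simp: vec_eq_iff forall_2)

lemma mat1_nth[simp]: "(mat 1 :: 'k::field^2^2) $ 1 $ 1 = 1" "(mat 1 :: 'k::field^2^2) $ 1 $ 2 = 0"
  "(mat 1 :: 'k::field^2^2) $ 2 $ 1 = 0" "(mat 1 :: 'k::field^2^2) $ 2 $ 2 = 1"
  by (simp_all add: mat_def)

lemma unip_nth[simp]: "(unip :: 'k::field^2^2) $ 1 $ 1 = 1" "(unip :: 'k::field^2^2) $ 1 $ 2 = 1"
  "(unip :: 'k::field^2^2) $ 2 $ 1 = 0" "(unip :: 'k::field^2^2) $ 2 $ 2 = 1"
  by (simp_all add: unip_def)

lemma group_GL2: "group (GL2 :: ('k::field^2^2) monoid)"
proof (rule groupI)
  show "\<And>x y. x \<in> carrier (GL2::('k^2^2) monoid) \<Longrightarrow> y \<in> carrier GL2 \<Longrightarrow> x \<otimes>\<^bsub>GL2\<^esub> y \<in> carrier GL2"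
    by (simp add: GL2_def invertible_mult)
  show "\<one>\<^bsub>GL2\<^esub> \<in> carrier (GL2::('k^2^2) monoid)" by (auto simp: GL2_def invertible_def intro!: exI[where x="mat 1"])
  show "\<And>x y z. x \<in> carrier (GL2::('k^2^2) monoid) \<Longrightarrow> y \<in> carrier GL2 \<Longrightarrow> z \<in> carrier GL2 \<Longrightarrow>
     x \<otimes>\<^bsub>GL2\<^esub> y \<otimes>\<^bsub>GL2\<^esub> z = x \<otimes>\<^bsub>GL2\<^esub> (y \<otimes>\<^bsub>GL2\<^esub> z)"
    by (simp add: GL2_def matrix_mul_assoc)
  show "\<And>x. x \<in> carrier (GL2::('k^2^2) monoid) \<Longrightarrow> \<one>\<^bsub>GL2\<^esub> \<otimes>\<^bsub>GL2\<^esub> x = x"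
    by (simp add: GL2_def)
  show "\<And>x. x \<in> carrier (GL2::('k^2^2) monoid) \<Longrightarrow> \<exists>y\<in>carrier GL2. y \<otimes>\<^bsub>GL2\<^esub> x = \<one>\<^bsub>GL2\<^esub>"
    apply (simp add: GL2_def invertible_def)
    by (metis invertible_def)
qed

lemma GL2_inv_eq:
  assumes "(A::'k::field^2^2) ** B = mat 1" "B ** A = mat 1"
  shows "inv\<^bsub>GL2\<^esub> A = B"
proof -
  interpret group "GL2::('k^2^2) monoid" by (rule group_GL2)
  have A: "A \<in> carrier GL2" "B \<in> carrier GL2" using assms by (auto simp: GL2_def invertible_def)
  show ?thesis using inv_equality[of B A] A assms by (simp add: GL2_def)
qed

lemma fin_fermat:
  fixes x :: "'k::{field,finite}"
  assumes "x \<noteq> 0" shows "x ^ (CARD('k) - 1) = 1"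
proof -
  let ?S = "UNIV - {0::'k}"
  have bij: "bij_betw (\<lambda>y. x * y) ?S ?S"
    unfolding bij_betw_def inj_on_def using assms
    apply (auto simp: image_def)
    subgoal for z by (rule bexI[where x="z / x"]) auto
    done
  have "prod (\<lambda>y. x * y) ?S = prod id ?S"
    using prod.reindex_bij_betw[OF bij, of id] by simp
  moreover have "prod (\<lambda>y. x * y) ?S = x ^ card ?S * prod id ?S"
    by (simp add: prod.distrib)
  moreover have "prod id ?S \<noteq> 0" by simp
  moreover have "card ?S = CARD('k) - 1" by (simp add: card_Diff_singleton)
  ultimately show ?thesis by simp
qed

lemma fin_char:
  "of_nat CARD('k) = (0::'k::{field,finite})"
proof -
  have bij: "bij_betw (\<lambda>y. y + 1) (UNIV::'k set) UNIV"
    unfolding bij_betw_def inj_on_def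
    apply (auto simp: image_def)
    subgoal for z by (rule exI[where x="z - 1"]) auto
    done
  have "sum (\<lambda>y. y + 1) (UNIV::'k set) = sum id UNIV"
    using sum.reindex_bij_betw[OF bij, of id] by simp
  moreover have "sum (\<lambda>y. y + 1) (UNIV::'k set) = sum id UNIV + of_nat CARD('k)"
    by (simp add: sum.distrib)
  ultimately show ?thesis by simp
qed

lemma fin_fermat2:
  fixes x :: "'k::{field,finite}"
  shows "x ^ CARD('k) = x"
proof (cases "x = 0")
  case True then show ?thesis by simp
next
  case False
  have "CARD('k) = Suc (CARD('k) - 1)" using finite_UNIV_card_ge_0 by (metis Suc_diff_1 finite)
  then have "x ^ CARD('k) = x * x ^ (CARD('k) - 1)" by (metis power_Suc)
  then show ?thesis using fin_fermat[OF False] by simp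
qed


lemma inv_unip: "inv\<^bsub>GL2\<^esub> (unip::'k::field^2^2) = mk 1 (-1) 0 1"
  by (rule GL2_inv_eq) (simp_all add: mat_eq2)

lemma Ugrp_upper:
  assumes "u \<in> (Ugrp :: ('k::field^2^2) set)"
  shows "u$1$1 = 1 \<and> u$2$1 = 0 \<and> u$2$2 = 1"
  using assms unfolding Ugrp_def
proof (induction rule: generate.induct)
  case one then show ?case by (simp add: GL2_def)
next
  case (incl h) then show ?case by simp
next
  case (inv h) then show ?case by (simp add: inv_unip)
next
  case (eng h1 h2) then show ?case by (simp add: GL2_def)
qed

theorem proposition3p4:
  fixes p :: nat and D :: "('k::{field,finite}^2^2) set"
    and \<phi> :: "'k^2^2 \<Rightarrow> 'k^2^2"
  assumes "Factorial_Ring.prime p" and "CARD('k) = p"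
    and "subgroup D GL2" and "D \<subseteq> Diag"
    and "subgroup (DU D) GL2"
    and "p dvd card (DU D)"
    and "\<phi> \<in> iso (GL2\<lparr>carrier := DU D\<rparr>) (GL2\<lparr>carrier := DU D\<rparr>)"
    and "\<And>x. x \<in> DU D \<Longrightarrow> Ugrp #>\<^bsub>GL2\<^esub> x = Ugrp #>\<^bsub>GL2\<^esub> (\<phi> x)"
  shows "\<exists>A \<in> Borel. \<forall>x \<in> DU D. \<phi> x = A ** x ** inv\<^bsub>GL2\<^esub> A"
proof -
  note grp = group_GL2[where 'k='k]
  let ?H = "GL2\<lparr>carrier := DU D\<rparr>"
  have gH: "group ?H" using subgroup.subgroup_is_group[OF assms(5) grp] .
  have gh: "group_hom ?H ?H \<phi>"
    using gH assms(7) by (simp add: group_hom_def group_hom_axioms_def iso_def)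
  have hmul: "\<phi> (x ** y) = \<phi> x ** \<phi> y" if "x \<in> DU D" "y \<in> DU D" for x y
    using group_hom.hom_mult[OF gh, of x y] that by (simp add: GL2_def)
  have h1: "\<phi> (mat 1) = mat 1"
    using group_hom.hom_one[OF gh] by (simp add: GL2_def)
  have hin: "\<phi> x \<in> DU D" if "x \<in> DU D" for x
    using assms(7) that by (auto simp: iso_def hom_def Pi_def)
  have hinj: "inj_on \<phi> (DU D)"
    using assms(7) by (auto simp: iso_def bij_betw_def)
  have oneD: "mat 1 \<in> D" using subgroup.one_closed[OF assms(3)] by (simp add: GL2_def)
  have oneU: "mat 1 \<in> Ugrp" using generate.one[of GL2 "{unip}"] by (simp add: Ugrp_def GL2_def)
  have unipU: "unip \<in> Ugrp" by (simp add: Ugrp_def generate.incl)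
  have UDU: "u \<in> DU D" if "u \<in> Ugrp" for u
  proof -
    have "u = mat 1 ** u" by simp
    then show ?thesis using that oneD unfolding DU_def by blast
  qed
  have DDU: "d \<in> DU D" if "d \<in> D" for d
  proof -
    have "d = d ** mat 1" by simp
    then show ?thesis using that oneU unfolding DU_def by blast
  qed
  have coset: "\<exists>u\<in>Ugrp. \<phi> x = u ** x" if "x \<in> DU D" for x
  proof -
    have "\<phi> x \<in> Ugrp #>\<^bsub>GL2\<^esub> (\<phi> x)" using oneU by (force simp: r_coset_def GL2_def)
    then have "\<phi> x \<in> Ugrp #>\<^bsub>GL2\<^esub> x" using assms(8)[OF that] by simp
    then show ?thesis by (auto simp: r_coset_def GL2_def)
  qed
  obtain a where a: "\<phi> unip = mk 1 a 0 1" "a \<noteq> 0"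
  proof -
    obtain u where u: "u \<in> Ugrp" "\<phi> unip = u ** unip" using coset[OF UDU[OF unipU]] by blast
    have e: "\<phi> unip = mk 1 (\<phi> unip $1$2) 0 1"
      using Ugrp_upper[OF u(1)] u(2) by (simp add: mat_eq2)
    have "\<phi> unip $1$2 \<noteq> 0"
    proof
      assume "\<phi> unip $1$2 = 0"
      then have "\<phi> unip = \<phi> (mat 1)" using e h1 by (simp add: mat_eq2)
      then have "(unip::'k^2^2) = mat 1" using hinj UDU[OF unipU] UDU[OF oneU] by (meson inj_onD)
      then show False by (simp add: mat_eq2)
    qed
    then show ?thesis using that e by blast
  qed
  have Dd: "d$2$1 = 0 \<and> d$1$2 = 0 \<and> d$1$1 \<noteq> 0 \<and> d$2$2 \<noteq> 0" if "d \<in> D" for d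
    using that assms(4) by (auto simp: Diag_def)
  have phD: "\<phi> d $1$1 = d$1$1 \<and> \<phi> d $2$1 = 0 \<and> \<phi> d $2$2 = d$2$2" if dD: "d \<in> D" for d
  proof -
    obtain u where u: "u \<in> Ugrp" "\<phi> d = u ** d" using coset[OF DDU[OF dD]] by blast
    show ?thesis using Ugrp_upper[OF u(1)] u(2) Dd[OF dD] by simp
  qed
  define c :: "'k^2^2 \<Rightarrow> 'k" where "c d = \<phi> d $1$2 / d$2$2" for d
  define chr :: "'k^2^2 \<Rightarrow> 'k" where "chr d = d$1$1 / d$2$2" for d
  have Dmul: "d ** d' \<in> D" if "d \<in> D" "d' \<in> D" for d d'
    using subgroup.m_closed[OF assms(3)] that by (simp add: GL2_def)
  have cocyc: "c (d ** d') = c d + chr d * c d'" if "d \<in> D" "d' \<in> D" for d d'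
  proof -
    have "\<phi> (d ** d') = \<phi> d ** \<phi> d'" using hmul DDU that by blast
    then have "\<phi> (d ** d') $1$2 = d$1$1 * \<phi> d' $1$2 + \<phi> d $1$2 * d'$2$2"
      using phD that by simp
    then show ?thesis using Dd[OF that(1)] Dd[OF that(2)] unfolding c_def chr_def
      by (simp add: field_simps)
  qed
  obtain \<beta> where beta: "\<And>d. d \<in> D \<Longrightarrow> \<phi> d $1$2 = \<beta> * (d$2$2 - d$1$1)"
  proof (cases "\<exists>d0\<in>D. chr d0 \<noteq> 1")
    case True
    then obtain d0 where d0: "d0 \<in> D" "chr d0 \<noteq> 1" by blast
    show ?thesis
    proof (rule that[of "c d0 / (1 - chr d0)"])
      fix d assume dD: "d \<in> D"
      have "d0 ** d = d ** d0" using Dd[OF d0(1)] Dd[OF dD] by (simp add: mat_eq2 mult.commute)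
      then have "c d0 + chr d0 * c d = c d + chr d * c d0"
        using cocyc[OF d0(1) dD] cocyc[OF dD d0(1)] by simp
      then have "c d * (1 - chr d0) = c d0 * (1 - chr d)" by (simp add: algebra_simps)
      then have "c d = c d0 / (1 - chr d0) * (1 - chr d)" using d0(2)
        by (simp add: field_simps)
      moreover have "\<phi> d $1$2 = c d * d$2$2" "chr d * d$2$2 = d$1$1"
        using Dd[OF dD] unfolding c_def chr_def by simp_all
      ultimately show "\<phi> d $1$2 = c d0 / (1 - chr d0) * (d$2$2 - d$1$1)"
        by (metis (no_types, lifting) left_diff_distrib mult.assoc mult_1)
    qed
  next
    case False
    then have triv: "chr d = 1" if "d \<in> D" for d using that by blast
    show ?thesis
    proof (rule that[of 0])
      fix d assume dD: "d \<in> D"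
      have pw: "d [^]\<^bsub>GL2\<^esub> n \<in> D \<and> c (d [^]\<^bsub>GL2\<^esub> n) = of_nat n * c d
          \<and> (d [^]\<^bsub>GL2\<^esub> n)$1$1 = d$1$1^n \<and> (d [^]\<^bsub>GL2\<^esub> n)$2$2 = d$2$2^n" for n
      proof (induction n)
        case 0 then show ?case using oneD h1 by (simp add: GL2_def c_def)
      next
        case (Suc n)
        have e: "d [^]\<^bsub>GL2\<^esub> Suc n = d [^]\<^bsub>GL2\<^esub> n ** d" by (simp add: GL2_def)
        have m: "d [^]\<^bsub>GL2\<^esub> n \<in> D" using Suc by blast
        show ?case unfolding e using Dmul[OF m dD] cocyc[OF m dD] triv[OF m] Suc Dd[OF m] Dd[OF dD]
          by (simp add: algebra_simps)
      qed
      have "d [^]\<^bsub>GL2\<^esub> p = d"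
        using pw[of p] Dd[OF dD] Dd[of "d [^]\<^bsub>GL2\<^esub> p"] fin_fermat2[where 'k='k] assms(2)
        by (simp add: mat_eq2)
      then have "c d = of_nat p * c d" using pw[of p] by simp
      then have "c d = 0" using fin_char[where 'k='k] assms(2) by simp
      then show "\<phi> d $1$2 = 0 * (d$2$2 - d$1$1)" using Dd[OF dD] by (simp add: c_def)
    qed
  qed
  define A :: "'k^2^2" where "A = mk a \<beta> 0 1"
  define Ai :: "'k^2^2" where "Ai = mk (1/a) (-\<beta>/a) 0 1"
  have AB: "A \<in> Borel" using a by (simp add: A_def Borel_def)
  have AAi: "A ** Ai = mat 1" "Ai ** A = mat 1" using a by (simp_all add: A_def Ai_def mat_eq2 field_simps)
  have invA: "inv\<^bsub>GL2\<^esub> A = Ai" using GL2_inv_eq AAi by blast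
  have dconj: "\<phi> d = A ** d ** Ai" if "d \<in> D" for d
    using phD[OF that] Dd[OF that] beta[OF that] a
    by (simp add: A_def Ai_def mat_eq2 field_simps)
  have uconj: "\<phi> u = A ** u ** Ai" if "u \<in> Ugrp" for u
    using that unfolding Ugrp_def
  proof (induction rule: generate.induct)
    case one then show ?case using h1 AAi by (simp add: GL2_def matrix_mul_assoc)
  next
    case (incl h) then have hu: "h = unip" by simp
    show ?case unfolding hu a(1) using a(2) by (simp add: A_def Ai_def mat_eq2 field_simps)
  next
    case (inv h)
    then have hu: "h = unip" by simp
    have wU: "mk 1 (-1) 0 1 \<in> Ugrp" using generate.inv[of unip "{unip}" GL2] by (simp add: Ugrp_def inv_unip)
    have "unip ** mk 1 (-1) 0 1 = (mat 1 :: 'k^2^2)" by (simp add: mat_eq2)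
    then have "\<phi> unip ** \<phi> (mk 1 (-1) 0 1) = mat 1" using hmul UDU wU unipU h1 by metis
    then have "mk 1 (-a) 0 1 ** (\<phi> unip ** \<phi> (mk 1 (-1) 0 1)) = mk 1 (-a) 0 1" by simp
    then have "\<phi> (mk 1 (-1) 0 1) = mk 1 (-a) 0 1"
      unfolding matrix_mul_assoc[symmetric] using a by (simp add: mat_eq2)
    then show ?case unfolding hu inv_unip using a(2) by (simp add: A_def Ai_def mat_eq2 field_simps)
  next
    case (eng h1 h2)
    have "\<phi> (h1 ** h2) = \<phi> h1 ** \<phi> h2" using hmul UDU eng(1,2) by (simp add: Ugrp_def)
    also have "\<dots> = A ** (h1 ** h2) ** Ai" using eng(3,4) AAi
      by (metis matrix_mul_assoc matrix_mul_lid)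
    finally show ?case by (simp add: GL2_def)
  qed
  show ?thesis
  proof (intro bexI[OF _ AB] ballI)
    fix x assume "x \<in> DU D"
    then obtain d u where du: "x = d ** u" "d \<in> D" "u \<in> Ugrp" unfolding DU_def by blast
    have "\<phi> x = \<phi> d ** \<phi> u" using hmul du DDU UDU by blast
    also have "\<dots> = A ** x ** Ai" using dconj[OF du(2)] uconj[OF du(3)] AAi du(1)
      by (metis matrix_mul_assoc matrix_mul_lid)
    finally show "\<phi> x = A ** x ** inv\<^bsub>GL2\<^esub> A" using invA by simp
  qed
qed

end
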